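(* Let $\boldsymbol{\mathcal{D}}=\{\mathcal{D}_1,\dots,\mathcal{D}_K\}$ with $K\ge2$, let $\mathcal{T}$ be a training algorithm and $n\ge1$. For any adversary $\mathcal{A}$ against $\mathsf{MM}$ there exist adversaries $\mathcal{A}^i_{\mathsf{MI}}$ ($i\in[K]$) and $\mathcal{A}^{i,j}_{\mathsf{PI}}$ ($i\ne j\in[K]$) such that $$\mathsf{Adv}_{\mathsf{MM}}(\mathcal{A}) \le \max_{i\in[K]}\mathsf{Adv}_{\mathsf{MI}_i}(\mathcal{A}^i_{\mathsf{MI}}) + \max_{i\ne j\in[K]}\mathsf{Adv}_{\mathsf{PI}_{i,j}}(\mathcal{A}^{i,j}_{\mathsf{PI}}).$$
   Context: Game $\mathsf{MM}(\mathcal{T},\boldsymbol{\mathcal{D}},n,\mathcal{A})$: $k\sim[K]$ uniformly; $k'\sim[K]\setminus\{k\}$ uniformly; $S\sim\mathcal{D}_k^n$; $\theta\gets\mathcal{T}(S)$; $b\sim\{0,1\}$ uniformly; if $b=0$ then $z\sim S$ (uniformly from $S$), else $z\sim\mathcal{D}_{k'}$; $\hat b\gets\mathcal{A}(\mathcal{T},\boldsymbol{\mathcal{D}},n,\theta,z)$. Game $\mathsf{MI}_i$: $S\sim\mathcal{D}_i^n$; $\theta\gets\mathcal{T}(S)$; $b\sim\{0,1\}$; if $b=0$ then $z\sim S$ else $z\sim\mathcal{D}_i$; $\hat b\gets\mathcal{A}^i_{\mathsf{MI}}(\mathcal{T},\mathcal{D}_i,n,\theta,z)$. Game $\mathsf{PI}_{i,j}$: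 $b\sim\{0,1\}$; if $b=0$ then $S\sim\mathcal{D}_i^n$ else $S\sim\mathcal{D}_j^n$; $\theta\gets\mathcal{T}(S)$; $\hat b\gets\mathcal{A}^{i,j}_{\mathsf{PI}}(\mathcal{T},\mathcal{D}_i,\mathcal{D}_j,n,\theta)$. For each of these games the advantage is $\Pr[\hat b=0\mid b=0]-\Pr[\hat b=0\mid b=1]$ (equivalently $2\Pr[\hat b=b]-1$). *)

theory Defs
  imports "HOL-Probability.Probability"
begin

fun iid_sample :: "'z pmf \<Rightarrow> nat \<Rightarrow> 'z list pmf" where
  "iid_sample D 0 = return_pmf []"
| "iid_sample D (Suc n) =
     bind_pmf D (\<lambda>x. bind_pmf (iid_sample D n) (\<lambda>xs. return_pmf (x # xs)))"

definition unif_from :: "'z list \<Rightarrow> 'z pmf" where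
  "unif_from S = map_pmf (\<lambda>i. S ! i) (pmf_of_set {0..<length S})"

text \<open>Bits: False = 0, True = 1. The games return the distribution of the
  adversary's guess given the challenge bit b.\<close>

definition MM_game ::
  "('z list \<Rightarrow> 'th pmf) \<Rightarrow> (nat \<Rightarrow> 'z pmf) \<Rightarrow> nat \<Rightarrow> nat
   \<Rightarrow> ('th \<Rightarrow> 'z \<Rightarrow> bool pmf) \<Rightarrow> bool \<Rightarrow> bool pmf" where
  "MM_game T D K n A b =
     bind_pmf (pmf_of_set {0..<K}) (\<lambda>k.
     bind_pmf (pmf_of_set ({0..<K} - {k})) (\<lambda>k'.
     bind_pmf (iid_sample (D k) n) (\<lambda>S.
     bind_pmf (T S) (\<lambda>\<theta>.
     bind_pmf (if b then D k' else unif_from S) (\<lambda>z.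
     A \<theta> z)))))"

definition MI_game ::
  "('z list \<Rightarrow> 'th pmf) \<Rightarrow> 'z pmf \<Rightarrow> nat
   \<Rightarrow> ('th \<Rightarrow> 'z \<Rightarrow> bool pmf) \<Rightarrow> bool \<Rightarrow> bool pmf" where
  "MI_game T Di n A b =
     bind_pmf (iid_sample Di n) (\<lambda>S.
     bind_pmf (T S) (\<lambda>\<theta>.
     bind_pmf (if b then Di else unif_from S) (\<lambda>z.
     A \<theta> z)))"

definition PI_game ::
  "('z list \<Rightarrow> 'th pmf) \<Rightarrow> 'z pmf \<Rightarrow> 'z pmf \<Rightarrow> nat
   \<Rightarrow> ('th \<Rightarrow> bool pmf) \<Rightarrow> bool \<Rightarrow> bool pmf" where
  "PI_game T Di Dj n A b =
     bind_pmf (iid_sample (if b then Dj else Di) n) (\<lambda>S.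
     bind_pmf (T S) (\<lambda>\<theta>. A \<theta>))"

definition adv :: "(bool \<Rightarrow> bool pmf) \<Rightarrow> real" where
  "adv G = pmf (G False) False - pmf (G True) False"

definition Adv_MM where "Adv_MM T D K n A = adv (MM_game T D K n A)"
definition Adv_MI where "Adv_MI T Di n A = adv (MI_game T Di n A)"
definition Adv_PI where "Adv_PI T Di Dj n A = adv (PI_game T Di Dj n A)"

end

theory Submission
  imports Defs
begin

lemma pmf_bind_set:
  assumes "finite X" "X \<noteq> {}"
  shows "pmf (bind_pmf (pmf_of_set X) f) x = (\<Sum>k\<in>X. pmf (f k) x) / card X"
  by (simp add: pmf_bind integral_pmf_of_set[OF assms(2,1)])

theorem mainTheorem9:
  fixes T :: "'z list \<Rightarrow> 'th pmf"
    and D :: "nat \<Rightarrow> 'z pmf"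
    and K n :: nat
    and A :: "'th \<Rightarrow> 'z \<Rightarrow> bool pmf"
  assumes "K \<ge> 2" and "n \<ge> 1"
  shows "\<exists>(AMI :: nat \<Rightarrow> 'th \<Rightarrow> 'z \<Rightarrow> bool pmf)
            (API :: nat \<Rightarrow> nat \<Rightarrow> 'th \<Rightarrow> bool pmf).
           Adv_MM T D K n A
             \<le> Max ((\<lambda>i. Adv_MI T (D i) n (AMI i)) ` {0..<K})
               + Max ((\<lambda>(i, j). Adv_PI T (D i) (D j) n (API i j)) `
                       {(i, j). i < K \<and> j < K \<and> i \<noteq> j})"
proof -
  define AMI :: "nat \<Rightarrow> 'th \<Rightarrow> 'z \<Rightarrow> bool pmf" where "AMI = (\<lambda>_. A)"
  define API :: "nat \<Rightarrow> nat \<Rightarrow> 'th \<Rightarrow> bool pmf" where "API = (\<lambda>i j \<theta>. bind_pmf (D i) (A \<theta>))"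
  define I where "I = {0..<K}"
  define PS where "PS = {(i, j). i < K \<and> j < K \<and> i \<noteq> j}"
  define P where "P k = pmf (bind_pmf (iid_sample (D k) n) (\<lambda>S. bind_pmf (T S) (\<lambda>\<theta>.
        bind_pmf (unif_from S) (A \<theta>)))) False" for k
  define Q where "Q k k' = pmf (bind_pmf (iid_sample (D k) n) (\<lambda>S. bind_pmf (T S) (\<lambda>\<theta>.
        bind_pmf (D k') (A \<theta>)))) False" for k k'
  define M1 where "M1 = Max ((\<lambda>i. Adv_MI T (D i) n (AMI i)) ` I)"
  define M2 where "M2 = Max ((\<lambda>(i, j). Adv_PI T (D i) (D j) n (API i j)) ` PS)"
  have finI: "finite I" and neI: "I \<noteq> {}" and cI: "card I = K" using assms(1) by (auto simp: I_def)
  have finPS: "finite PS" unfolding PS_def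
    by (rule finite_subset[of _ "{0..<K} \<times> {0..<K}"]) auto
  have MI: "Adv_MI T (D k) n (AMI k) = P k - Q k k" for k
    by (simp add: Adv_MI_def adv_def MI_game_def P_def Q_def AMI_def)
  have PI: "Adv_PI T (D i) (D j) n (API i j) = Q i i - Q j i" for i j
    by (simp add: Adv_PI_def adv_def PI_game_def Q_def API_def bind_assoc_pmf)
  have ne2: "I - {k} \<noteq> {}" if "k \<in> I" for k
  proof -
    have "card (I - {k}) = K - 1" using that finI cI by simp
    then show ?thesis using assms(1) by (metis card.empty diff_is_0_eq le_trans nat_le_linear not_one_le_zero numeral_le_one_iff semiring_norm(69) Suc_1 Suc_le_D diff_Suc_1 less_eq_Suc_le zero_less_Suc)
  qed
  have c2: "card (I - {k}) = K - 1" if "k \<in> I" for k using that finI cI by simp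
  have F: "pmf (MM_game T D K n A False) False = (\<Sum>k\<in>I. P k) / K"
    unfolding MM_game_def I_def[symmetric]
    apply (subst pmf_bind_set[OF finI neI])
    by (simp add: cI P_def)
  have Tr: "pmf (MM_game T D K n A True) False = (\<Sum>k\<in>I. (\<Sum>k'\<in>I-{k}. Q k k') / (K - 1)) / K"
    unfolding MM_game_def I_def[symmetric]
    apply (subst pmf_bind_set[OF finI neI])
    apply (simp add: cI)
    apply (rule disjI2)
    apply (rule sum.cong[OF refl])
    apply (subst pmf_bind_set)
    using finI ne2 c2 assms(1) by (auto simp: Q_def)
  have Kpos: "real K > 0" "real K - 1 > 0" using assms(1) by auto
  have b1: "(\<Sum>k\<in>I. P k - Q k k) \<le> K * M1"
  proof -
    have "(\<Sum>k\<in>I. P k - Q k k) \<le> (\<Sum>k\<in>I. M1)"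
      apply (rule sum_mono) unfolding M1_def MI[symmetric]
      using finI by (intro Max_ge) auto
    then show ?thesis using cI by simp
  qed
  have b2: "(\<Sum>k\<in>I. \<Sum>k'\<in>I-{k}. Q k' k' - Q k k') \<le> K * (K - 1) * M2"
  proof -
    have "(\<Sum>k\<in>I. \<Sum>k'\<in>I-{k}. Q k' k' - Q k k') \<le> (\<Sum>k\<in>I. \<Sum>k'\<in>I-{k}. M2)"
    proof (intro sum_mono)
      fix k k' assume "k \<in> I" "k' \<in> I - {k}"
      then have "(k', k) \<in> PS" by (auto simp: PS_def I_def)
      then show "Q k' k' - Q k k' \<le> M2" unfolding M2_def PI[symmetric]
        using finPS by (intro Max_ge) force+
    qed
    also have "\<dots> = (\<Sum>k\<in>I. real (K - 1) * M2)" using c2 by simp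
    finally show ?thesis using cI assms(1) by (simp add: of_nat_diff)
  qed
  have z: "(\<Sum>k\<in>I. \<Sum>k'\<in>I-{k}. Q k k - Q k' k') = 0"
  proof -
    have "(\<Sum>k\<in>I. \<Sum>k'\<in>I-{k}. Q k k - Q k' k') =
          (\<Sum>k\<in>I. (K - 1) * Q k k - ((\<Sum>j\<in>I. Q j j) - Q k k))"
      apply (rule sum.cong[OF refl])
      using finI c2 assms(1) by (simp add: sum_subtractf sum_diff1 of_nat_diff)
    also have "\<dots> = (\<Sum>k\<in>I. real K * Q k k) - real K * (\<Sum>j\<in>I. Q j j)"
      using cI assms(1) by (simp add: sum_subtractf of_nat_diff algebra_simps)
    also have "\<dots> = 0" by (simp add: sum_distrib_left)
    finally show ?thesis .
  qed
  have key: "(\<Sum>k\<in>I. (\<Sum>k'\<in>I-{k}. Q k k') / (K - 1)) =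
      (\<Sum>k\<in>I. Q k k) - (\<Sum>k\<in>I. \<Sum>k'\<in>I-{k}. Q k k - Q k' k') / (K - 1)
        - (\<Sum>k\<in>I. \<Sum>k'\<in>I-{k}. Q k' k' - Q k k') / (K - 1)"
  proof -
    have "(\<Sum>k\<in>I. (\<Sum>k'\<in>I-{k}. Q k k') / (K - 1)) = (\<Sum>k\<in>I. Q k k
        - (\<Sum>k'\<in>I-{k}. Q k k - Q k' k') / (K - 1) - (\<Sum>k'\<in>I-{k}. Q k' k' - Q k k') / (K - 1))"
    proof (rule sum.cong[OF refl])
      fix k assume k: "k \<in> I"
      have "(\<Sum>k'\<in>I-{k}. Q k k - Q k' k') + (\<Sum>k'\<in>I-{k}. Q k' k' - Q k k')
            = (\<Sum>k'\<in>I-{k}. Q k k) - (\<Sum>k'\<in>I-{k}. Q k k')"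
        by (simp add: sum.distrib[symmetric] sum_subtractf)
      also have "(\<Sum>k'\<in>I-{k}. Q k k) = (real K - 1) * Q k k" using c2[OF k] assms(1) by (simp add: of_nat_diff)
      finally show "(\<Sum>k'\<in>I-{k}. Q k k') / (K - 1) = Q k k
        - (\<Sum>k'\<in>I-{k}. Q k k - Q k' k') / (K - 1) - (\<Sum>k'\<in>I-{k}. Q k' k' - Q k k') / (K - 1)"
        using Kpos by (simp add: diff_divide_distrib[symmetric] add_divide_distrib[symmetric] divide_simps) (simp add: algebra_simps)
    qed
    then show ?thesis by (simp only: sum_divide_distrib sum_subtractf[symmetric])
  qed
  have "Adv_MM T D K n A = ((\<Sum>k\<in>I. P k - Q k k) + (\<Sum>k\<in>I. \<Sum>k'\<in>I-{k}. Q k' k' - Q k k') / (K - 1)) / K"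
    unfolding Adv_MM_def adv_def F Tr key z
    by (simp add: sum_subtractf diff_divide_distrib add_divide_distrib)
  also have "\<dots> \<le> (K * M1 + K * (K - 1) * M2 / (K - 1)) / K"
    using b1 b2 Kpos by (intro divide_right_mono add_mono) (auto intro: divide_right_mono)
  also have "\<dots> = M1 + M2" using Kpos by (simp add: field_simps)
  finally show ?thesis unfolding M1_def M2_def I_def PS_def by blast
qed

end
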